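(* Let $n$ be a positive integer and let $\mathcal F$ be an $\mathcal N$-saturated family of subsets of $[n]$. Let $A,B,C,D\in\mathcal F$ be distinct sets forming an induced butterfly with maximal elements $A,B$, i.e. $C\subset A$, $C\subset B$, $D\subset A$, $D\subset B$, $A,B$ are incomparable and $C,D$ are incomparable. Then there exists $M\in\mathcal F$ such that $C\cup D\subseteq M\subseteq A\cap B$.
   Context: The poset $\mathcal N$ has four elements $a,b,c,d$ with $a<c$, $b<c$, $b<d$ and no other comparabilities. A family $\mathcal Q$ of sets (ordered by inclusion) contains an induced copy of $\mathcal N$ if there are distinct sets in $\mathcal Q$ whose inclusion relations are exactly those of $a,b,c,d$ above. A family $\mathcal F$ of subsets of $[n]=\{1,\dots,n\}$ is $\mathcal N$-saturated if $\mathcal F$ contains no induced copy of $\mathcal N$, but for every $S\subseteq[n]$ with $S\notin\mathcal F$, the family $\mathcal F\cup\{S\}$ contains an induced copy of $\mathcal N$. *)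

theory Defs
  imports Main
begin

definition incomparable :: "'a set \<Rightarrow> 'a set \<Rightarrow> bool" where
  "incomparable X Y \<longleftrightarrow> \<not> X \<subseteq> Y \<and> \<not> Y \<subseteq> X"

definition induced_N :: "'a set \<Rightarrow> 'a set \<Rightarrow> 'a set \<Rightarrow> 'a set \<Rightarrow> bool" where
  "induced_N a b c d \<longleftrightarrow>
     distinct [a, b, c, d] \<and>
     a \<subset> c \<and> b \<subset> c \<and> b \<subset> d \<and>
     incomparable a b \<and> incomparable a d \<and> incomparable c d"

definition contains_induced_N :: "'a set set \<Rightarrow> bool" where
  "contains_induced_N Q \<longleftrightarrow>
     (\<exists>a\<in>Q. \<exists>b\<in>Q. \<exists>c\<in>Q. \<exists>d\<in>Q. induced_N a b c d)"

definition N_saturated :: "nat \<Rightarrow> nat set set \<Rightarrow> bool" where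
  "N_saturated n F \<longleftrightarrow>
     F \<subseteq> Pow {1..n} \<and> \<not> contains_induced_N F \<and>
     (\<forall>S. S \<subseteq> {1..n} \<longrightarrow> S \<notin> F \<longrightarrow> contains_induced_N (insert S F))"

end

theory Submission
  imports Defs
begin

lemma key:
  assumes noN: "\<not> contains_induced_N F"
    and AF: "A \<in> F" and BF: "B \<in> F" and SF: "S \<notin> F"
    and SU: "S \<subseteq> A \<inter> B" and AB: "incomparable A B"
    and h1: "\<And>E. E \<in> F \<Longrightarrow> E \<subseteq> A \<inter> B \<Longrightarrow> E \<subseteq> S"
    and h2: "\<And>x. x \<in> S \<Longrightarrow> \<exists>E\<in>F. E \<subseteq> A \<inter> B \<and> x \<in> E"
  shows "\<not> contains_induced_N (insert S F)"
proof
  assume "contains_induced_N (insert S F)"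
  then obtain a b c d where ins: "a \<in> insert S F" "b \<in> insert S F" "c \<in> insert S F" "d \<in> insert S F"
    and N: "induced_N a b c d" unfolding contains_induced_N_def by blast
  have NF: "\<And>a b c d. a \<in> F \<Longrightarrow> b \<in> F \<Longrightarrow> c \<in> F \<Longrightarrow> d \<in> F \<Longrightarrow> \<not> induced_N a b c d"
    using noN unfolding contains_induced_N_def by blast
  from N have dist: "distinct [a,b,c,d]" and r: "a \<subset> c" "b \<subset> c" "b \<subset> d"
    "incomparable a b" "incomparable a d" "incomparable c d"
    unfolding induced_N_def by auto
  have sub: "\<And>Z. \<not> S \<subseteq> Z \<Longrightarrow> \<exists>E\<in>F. E \<subseteq> S \<and> \<not> E \<subseteq> Z"
  proof -
    fix Z assume "\<not> S \<subseteq> Z"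
    then obtain x where "x \<in> S" "x \<notin> Z" by blast
    then obtain E where "E \<in> F" "E \<subseteq> A \<inter> B" "x \<in> E" using h2 by blast
    then show "\<exists>E\<in>F. E \<subseteq> S \<and> \<not> E \<subseteq> Z" using h1 \<open>x \<notin> Z\<close> by blast
  qed
  have SA: "S \<subseteq> A" "S \<subseteq> B" using SU by auto
  consider "a = S" | "b = S" | "c = S" | "d = S" | "a \<in> F" "b \<in> F" "c \<in> F" "d \<in> F"
    using ins by blast
  then show False
  proof cases
    case 1
    then have F: "b \<in> F" "c \<in> F" "d \<in> F" using ins dist by auto
    have "\<not> S \<subseteq> d" using r 1 unfolding incomparable_def by auto
    then obtain E where E: "E \<in> F" "E \<subseteq> S" "\<not> E \<subseteq> d" using sub by blast
    have i: "\<not> a \<subseteq> b" "\<not> b \<subseteq> a" "\<not> a \<subseteq> d" "\<not> d \<subseteq> a" "\<not> c \<subseteq> d" "\<not> d \<subseteq> c"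
      using r unfolding incomparable_def by auto
    have "E \<subset> c" using E(2) r(1) 1 by blast
    moreover have "incomparable E b" "incomparable E d"
      unfolding incomparable_def using E i r(3) 1 by blast+
    moreover have "distinct [E,b,c,d]" using dist \<open>E \<subset> c\<close> calculation(2,3) unfolding incomparable_def by auto
    ultimately have "induced_N E b c d"
      using r unfolding induced_N_def by blast
    then show False using NF E F by blast
  next
    case 2
    then have F: "a \<in> F" "c \<in> F" "d \<in> F" using ins dist by auto
    have "\<not> S \<subseteq> a" using r 2 unfolding incomparable_def by auto
    then obtain E where E: "E \<in> F" "E \<subseteq> S" "\<not> E \<subseteq> a" using sub by blast
    have i: "\<not> a \<subseteq> b" "\<not> b \<subseteq> a" "\<not> a \<subseteq> d" "\<not> d \<subseteq> a" "\<not> c \<subseteq> d" "\<not> d \<subseteq> c"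
      using r unfolding incomparable_def by auto
    have "E \<subset> c" "E \<subset> d" using E(2) r(2,3) 2 by blast+
    moreover have "incomparable a E"
      unfolding incomparable_def using E i r 2 by blast
    moreover have "distinct [a,E,c,d]" using dist calculation unfolding incomparable_def by auto
    ultimately have "induced_N a E c d"
      using r unfolding induced_N_def by blast
    then show False using NF E F by blast
  next
    case 3
    then have F: "a \<in> F" "b \<in> F" "d \<in> F" using ins dist by auto
    have "\<not> d \<subseteq> A \<inter> B" using h1 F r 3 unfolding incomparable_def by blast
    then obtain Y where Y: "Y \<in> F" "S \<subseteq> Y" "\<not> d \<subseteq> Y" using AF BF SA by blast
    have i: "\<not> a \<subseteq> b" "\<not> b \<subseteq> a" "\<not> a \<subseteq> d" "\<not> d \<subseteq> a" "\<not> c \<subseteq> d" "\<not> d \<subseteq> c"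
      using r unfolding incomparable_def by auto
    have "a \<subset> Y" "b \<subset> Y" using Y(2) r(1,2) 3 by blast+
    moreover have "incomparable Y d"
      unfolding incomparable_def using Y i r 3 by blast
    moreover have "distinct [a,b,Y,d]" using dist calculation unfolding incomparable_def by auto
    ultimately have "induced_N a b Y d"
      using r unfolding induced_N_def by blast
    then show False using NF Y F by blast
  next
    case 4
    then have F: "a \<in> F" "b \<in> F" "c \<in> F" using ins dist by auto
    have "\<not> a \<subseteq> A \<inter> B" using h1 F r 4 unfolding incomparable_def by blast
    then obtain Y where Y: "Y \<in> F" "S \<subseteq> Y" "\<not> a \<subseteq> Y" using AF BF SA by blast
    have i: "\<not> a \<subseteq> b" "\<not> b \<subseteq> a" "\<not> a \<subseteq> d" "\<not> d \<subseteq> a" "\<not> c \<subseteq> d" "\<not> d \<subseteq> c"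
      using r unfolding incomparable_def by auto
    have "b \<subset> Y" using Y(2) r(3) 4 by blast
    moreover have "incomparable a Y" "incomparable c Y"
      unfolding incomparable_def using Y i r 4 by blast+
    moreover have "distinct [a,b,c,Y]" using dist calculation unfolding incomparable_def by auto
    ultimately have "induced_N a b c Y"
      using r unfolding induced_N_def by blast
    then show False using NF Y F by blast
  next
    case 5
    then show False using NF[OF 5] N by blast
  qed
qed

theorem corollary2p4:
  fixes n :: nat and F :: "nat set set" and A B C D :: "nat set"
  assumes "n \<ge> 1"
    and "N_saturated n F"
    and "A \<in> F" "B \<in> F" "C \<in> F" "D \<in> F"
    and "distinct [A, B, C, D]"
    and "C \<subset> A" "C \<subset> B" "D \<subset> A" "D \<subset> B"
    and "incomparable A B" "incomparable C D"
  shows "\<exists>M\<in>F. C \<union> D \<subseteq> M \<and> M \<subseteq> A \<inter> B"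
proof (rule ccontr)
  assume no: "\<not> ?thesis"
  define S where "S = \<Union>{E\<in>F. E \<subseteq> A \<inter> B}"
  have SU: "S \<subseteq> A \<inter> B" unfolding S_def by blast
  have "C \<subseteq> A \<inter> B" "D \<subseteq> A \<inter> B" using assms(8-11) by auto
  then have CD: "C \<union> D \<subseteq> S" unfolding S_def using assms(5,6) by blast
  have SF: "S \<notin> F" using no SU CD by auto
  have sat: "F \<subseteq> Pow {1..n}" "\<not> contains_induced_N F"
    "\<And>S. S \<subseteq> {1..n} \<Longrightarrow> S \<notin> F \<Longrightarrow> contains_induced_N (insert S F)"
    using assms(2) unfolding N_saturated_def by auto
  have "A \<subseteq> {1..n}" using sat(1) assms(3) by blast
  then have "S \<subseteq> {1..n}" using SU by blast
  then have "contains_induced_N (insert S F)" using sat(3) SF by blast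
  moreover have "\<not> contains_induced_N (insert S F)"
    by (rule key[OF sat(2) assms(3) assms(4) SF SU assms(12)]) (unfold S_def, blast, blast)
  ultimately show False by blast
qed

end
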